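(* The $2\times 2$ chessboard $C=[-1,0]\times[-1,0]\,\cup\,[0,1]\times[0,1]\subset\mathbb{R}^2$ is neither drawable nor closed-disk drawable.
   Context: For $A\subseteq\mathbb{R}^2$ let $N(A)=\{x\in\mathbb{R}^2: |x-a|<1 \text{ for some } a\in A\}$ and $N_{\le}(A)=\{x\in\mathbb{R}^2: |x-a|\le 1 \text{ for some } a\in A\}$. Let $\mathcal{D}_1=\{N(A_1): A_1\subseteq\mathbb{R}^2\}$ and for $n\ge 2$ let $\mathcal{D}_n=\{D\cup N(A_n): D\in\mathcal{D}_{n-1}, A_n\subseteq\mathbb{R}^2\}$ if $n$ is odd and $\mathcal{D}_n=\{D\setminus N(A_n): D\in\mathcal{D}_{n-1}, A_n\subseteq\mathbb{R}^2\}$ if $n$ is even. A set is drawable if it lies in $\mathcal{D}=\bigcup_{n\ge1}\mathcal{D}_n$. The collection $\mathcal{D}_{\le}$ of closed-disk drawable sets is defined in the same way with every $N(\cdot)$ replaced by $N_{\le}(\cdot)$. *)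

theory Defs
  imports "HOL-Analysis.Analysis"
begin

type_synonym plane = "real ^ 2"

definition pt :: "real \<Rightarrow> real \<Rightarrow> plane" where
  "pt a b = (\<chi> i. if i = 1 then a else b)"

definition N_open :: "plane set \<Rightarrow> plane set" where
  "N_open A = {x. \<exists>a\<in>A. dist x a < 1}"

definition N_closed :: "plane set \<Rightarrow> plane set" where
  "N_closed A = {x. \<exists>a\<in>A. dist x a \<le> 1}"

fun Dlevel :: "(plane set \<Rightarrow> plane set) \<Rightarrow> nat \<Rightarrow> plane set set" where
  "Dlevel N 0 = {}"
| "Dlevel N (Suc 0) = {N A | A. True}"
| "Dlevel N (Suc (Suc m)) =
     (if odd (Suc (Suc m))
      then {D \<union> N A | D A. D \<in> Dlevel N (Suc m)}
      else {D - N A | D A. D \<in> Dlevel N (Suc m)})"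

definition drawable :: "plane set \<Rightarrow> bool" where
  "drawable S \<longleftrightarrow> (\<exists>n\<ge>1. S \<in> Dlevel N_open n)"

definition closed_drawable :: "plane set \<Rightarrow> bool" where
  "closed_drawable S \<longleftrightarrow> (\<exists>n\<ge>1. S \<in> Dlevel N_closed n)"

definition chessboard :: "plane set" where
  "chessboard = {pt a b | a b. -1 \<le> a \<and> a \<le> 0 \<and> -1 \<le> b \<and> b \<le> 0}
              \<union> {pt a b | a b. 0 \<le> a \<and> a \<le> 1 \<and> 0 \<le> b \<and> b \<le> 1}"

end

theory Submission imports Defs begin

lemma core:
  fixes t d s2 w k :: real
  assumes "0<t" "40*t \<le> 1" "0<d" "13*d \<le> t" "s2 < (1+d)^2" "0 \<le> s2" "0 \<le> w"
    "4*w^2 \<ge> s2" "k \<le> 5" "0 \<le> k"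
  shows "k*t^2 - 2*t*w + s2 < 1"
proof -
  have tt: "t*t \<le> t * (1/40)" using assms(1,2) by (intro mult_left_mono) auto
  have kt: "k*(t*t) \<le> 5*(t*t)" using assms(9) by (intro mult_right_mono) auto
  have a: "k*t^2 \<le> t/8" using tt kt by (simp add: power2_eq_square)
  have tw: "t*w \<ge> 0" using assms by simp
  have dd: "d*d \<le> d*1" using assms(3,4,2) by (intro mult_left_mono) auto
  have c: "s2 < 1 + 3*d" using assms(5) dd by (simp add: power2_eq_square algebra_simps)
  show ?thesis
  proof (cases "s2 \<le> 1/2")
    case True
    then show ?thesis using a tw assms(2) by linarith
  next
    case False
    have w: "w \<ge> 1/3"
    proof (rule ccontr)
      assume "\<not> w \<ge> 1/3"
      then have "w*w \<le> w*(1/3)" using assms(7) by (intro mult_left_mono) auto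
      then have "w*w < 1/8" using \<open>\<not> w \<ge> 1/3\<close> by linarith
      then show False using False assms(8) by (simp add: power2_eq_square)
    qed
    have b: "t*w \<ge> t*(1/3)" using w assms(1) by (intro mult_left_mono) auto
    have b2: "2*t*w \<ge> 2*(t*(1/3))" using b by simp
    show ?thesis using a b2 c assms(4) assms(1) by linarith
  qed
qed

lemma dir:
  fixes t d r a1 a2 u1 u2 :: real
  assumes "0<t" "40*t \<le> 1" "4*t \<le> r" "0<d" "13*d \<le> t" "a1^2+a2^2 < (1+d)^2"
    "u1^2+u2^2 \<le> 5" "0 \<le> u1*a1+u2*a2" "4*(u1*a1+u2*a2)^2 \<ge> a1^2+a2^2"
  shows "sqrt ((t*u1)^2+(t*u2)^2) < r" "sqrt ((t*u1-a1)^2+(t*u2-a2)^2) < 1"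
proof -
  have "(t*u1)^2+(t*u2)^2 = t^2*(u1^2+u2^2)" by (simp add: algebra_simps power2_eq_square)
  also have "\<dots> \<le> t^2*5" using assms(7) by (intro mult_left_mono) auto
  also have "\<dots> < (4*t)^2" using assms(1) by (simp add: power2_eq_square)
  also have "\<dots> \<le> r^2" using assms(1,3) by (intro power_mono) auto
  finally have "(t*u1)^2+(t*u2)^2 < r^2" .
  then show "sqrt ((t*u1)^2+(t*u2)^2) < r" using assms(1,3)
    by (intro real_less_lsqrt) auto
  have e: "(t*u1-a1)^2+(t*u2-a2)^2 = (u1^2+u2^2)*t^2 - 2*t*(u1*a1+u2*a2) + (a1^2+a2^2)"
    by (simp add: algebra_simps power2_eq_square)
  have "(u1^2+u2^2)*t^2 - 2*t*(u1*a1+u2*a2) + (a1^2+a2^2) < 1"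
    by (rule core) (use assms in auto)
  then show "sqrt ((t*u1-a1)^2+(t*u2-a2)^2) < 1" using e by simp
qed

lemma pt_1[simp]: "pt a b $ 1 = a" by (simp add: pt_def)
lemma pt_2[simp]: "pt a b $ 2 = b" by (simp add: pt_def)
lemma pt_eta: "x = pt (x$1) (x$2)"
  by (simp add: vec_eq_iff forall_2)
lemma pt_eq_iff[simp]: "pt a b = pt c d \<longleftrightarrow> a = c \<and> b = d"
  by (metis pt_1 pt_2)
lemma norm_pt: "norm (pt a b) = sqrt (a^2 + b^2)"
  by (simp add: norm_vec_def L2_set_def sum_2)
lemma dist_pt: "dist (pt a b) (pt c d) = sqrt ((a-c)^2 + (b-d)^2)"
proof -
  have "pt a b - pt c d = pt (a-c) (b-d)" by (simp add: vec_eq_iff forall_2)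
  then show ?thesis by (simp add: dist_norm norm_pt)
qed
lemma chess_iff: "pt x y \<in> chessboard \<longleftrightarrow>
   ((-1\<le>x \<and> x\<le>0 \<and> -1\<le>y \<and> y\<le>0) \<or> (0\<le>x \<and> x\<le>1 \<and> 0\<le>y \<and> y\<le>1))"
  unfolding chessboard_def by auto

lemma boundPQ:
  fixes a1 a2 :: real
  assumes "\<bar>2*a1-a2\<bar> \<le> \<bar>2*a2-a1\<bar>"
  shows "4*(2*a2-a1)^2 \<ge> a1^2+a2^2"
proof -
  define P where "P = 2*a2-a1"
  define Q where "Q = 2*a1-a2"
  have e: "9*(a1^2+a2^2) = 5*P^2+5*Q^2+8*(P*Q)"
    unfolding P_def Q_def by (simp add: algebra_simps power2_eq_square)
  have q: "\<bar>Q\<bar> \<le> \<bar>P\<bar>" using assms unfolding P_def Q_def .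
  have "Q^2 \<le> P^2" using q by (simp add: abs_le_square_iff)
  moreover have "P*Q \<le> P^2"
  proof -
    have "P*Q \<le> \<bar>P\<bar>*\<bar>Q\<bar>" by (simp add: abs_mult[symmetric])
    also have "\<dots> \<le> \<bar>P\<bar>*\<bar>P\<bar>" using q by (intro mult_left_mono) auto
    finally show ?thesis by (simp add: power2_eq_square)
  qed
  ultimately have "9*(a1^2+a2^2) \<le> 36*P^2" using e by (smt (verit) zero_le_power2)
  then show ?thesis unfolding P_def by simp
qed

lemma key_coords:
  fixes r :: real
  assumes r: "r > 0"
  shows "\<exists>d>0. \<forall>a1 a2. a1^2+a2^2 < (1+d)^2 \<longrightarrow>
     (\<exists>x y. sqrt (x^2+y^2) < r \<and> sqrt ((x-a1)^2+(y-a2)^2) < 1 \<and> pt x y \<in> chessboard) \<and>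
     (\<exists>x y. sqrt (x^2+y^2) < r \<and> sqrt ((x-a1)^2+(y-a2)^2) < 1 \<and> pt x y \<notin> chessboard)"
proof -
  define t where "t = min (r/4) (1/40)"
  define d where "d = t/13"
  have t: "0<t" "40*t \<le> 1" "4*t \<le> r" using r unfolding t_def by auto
  have d: "0<d" "13*d \<le> t" using t unfolding d_def by auto
  have t1: "t \<le> 1" using t by simp
  note D = dir[OF t d]
  show ?thesis
  proof (rule exI[of _ d], intro conjI allI impI)
    show "0 < d" by fact
    fix a1 a2 :: real
    assume a: "a1^2+a2^2 < (1+d)^2"
    show "\<exists>x y. sqrt (x^2+y^2) < r \<and> sqrt ((x-a1)^2+(y-a2)^2) < 1 \<and> pt x y \<in> chessboard"
    proof (cases "\<bar>a2\<bar> \<le> \<bar>a1\<bar>")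
      case True
      then have sq: "a2^2 \<le> a1^2" by (simp add: abs_le_square_iff)
      show ?thesis
      proof (cases "a1 \<ge> 0")
        case True
        have "(1*a1+0*a2)^2 = a1^2" by simp
        then have "4*(1*a1+0*a2)^2 \<ge> a1^2+a2^2" using sq zero_le_power2[of a1] by linarith
        from D[OF a _ _ this] True have "sqrt ((t*1)^2+(t*0)^2) < r" "sqrt ((t*1-a1)^2+(t*0-a2)^2) < 1"
          by auto
        moreover have "pt (t*1) (t*0) \<in> chessboard" using t t1 by (simp add: chess_iff)
        ultimately show ?thesis by blast
      next
        case False
        have "((-1)*a1+0*a2)^2 = a1^2" by simp
        then have "4*((-1)*a1+0*a2)^2 \<ge> a1^2+a2^2" using sq zero_le_power2[of a1] by linarith
        from D[OF a _ _ this] False have "sqrt ((t*(-1))^2+(t*0)^2) < r" "sqrt ((t*(-1)-a1)^2+(t*0-a2)^2) < 1"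
          by auto
        moreover have "pt (t*(-1)) (t*0) \<in> chessboard" using t t1 by (simp add: chess_iff)
        ultimately show ?thesis by blast
      qed
    next
      case False
      then have sq: "a1^2 \<le> a2^2" by (simp add: abs_le_square_iff)
      show ?thesis
      proof (cases "a2 \<ge> 0")
        case True
        have "(0*a1+1*a2)^2 = a2^2" by simp
        then have "4*(0*a1+1*a2)^2 \<ge> a1^2+a2^2" using sq zero_le_power2[of a2] by linarith
        from D[OF a _ _ this] True have "sqrt ((t*0)^2+(t*1)^2) < r" "sqrt ((t*0-a1)^2+(t*1-a2)^2) < 1"
          by auto
        moreover have "pt (t*0) (t*1) \<in> chessboard" using t t1 by (simp add: chess_iff)
        ultimately show ?thesis by blast
      next
        case False
        have "(0*a1+(-1)*a2)^2 = a2^2" by simp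
        then have "4*(0*a1+(-1)*a2)^2 \<ge> a1^2+a2^2" using sq zero_le_power2[of a2] by linarith
        from D[OF a _ _ this] False have "sqrt ((t*0)^2+(t*(-1))^2) < r" "sqrt ((t*0-a1)^2+(t*(-1)-a2)^2) < 1"
          by auto
        moreover have "pt (t*0) (t*(-1)) \<in> chessboard" using t t1 by (simp add: chess_iff)
        ultimately show ?thesis by blast
      qed
    qed
    show "\<exists>x y. sqrt (x^2+y^2) < r \<and> sqrt ((x-a1)^2+(y-a2)^2) < 1 \<and> pt x y \<notin> chessboard"
    proof (cases "\<bar>2*a1-a2\<bar> \<le> \<bar>2*a2-a1\<bar>")
      case True
      have b: "4*(2*a2-a1)^2 \<ge> a1^2+a2^2" using boundPQ[OF True] .
      show ?thesis
      proof (cases "2*a2-a1 \<ge> 0")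
        case True
        have e: "(-1)*a1+2*a2 = 2*a2-a1" by simp
        have "4*((-1)*a1+2*a2)^2 \<ge> a1^2+a2^2" using b e by simp
        from D[OF a _ _ this] True have "sqrt ((t*(-1))^2+(t*2)^2) < r" "sqrt ((t*(-1)-a1)^2+(t*2-a2)^2) < 1"
          by auto
        moreover have "pt (t*(-1)) (t*2) \<notin> chessboard" using t by (simp add: chess_iff)
        ultimately show ?thesis by blast
      next
        case False
        have e: "1*a1+(-2)*a2 = -(2*a2-a1)" by simp
        have "4*(1*a1+(-2)*a2)^2 \<ge> a1^2+a2^2" unfolding e power2_minus using b by simp
        from D[OF a _ _ this] False have "sqrt ((t*1)^2+(t*(-2))^2) < r" "sqrt ((t*1-a1)^2+(t*(-2)-a2)^2) < 1"
          by auto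
        moreover have "pt (t*1) (t*(-2)) \<notin> chessboard" using t by (simp add: chess_iff)
        ultimately show ?thesis by blast
      qed
    next
      case False
      then have F: "\<bar>2*a2-a1\<bar> \<le> \<bar>2*a1-a2\<bar>" by simp
      have b: "4*(2*a1-a2)^2 \<ge> a2^2+a1^2" using boundPQ[OF F] .
      show ?thesis
      proof (cases "2*a1-a2 \<ge> 0")
        case True
        have e: "2*a1+(-1)*a2 = 2*a1-a2" by simp
        have "4*(2*a1+(-1)*a2)^2 \<ge> a1^2+a2^2" using b e by simp
        from D[OF a _ _ this] True have "sqrt ((t*2)^2+(t*(-1))^2) < r" "sqrt ((t*2-a1)^2+(t*(-1)-a2)^2) < 1"
          by auto
        moreover have "pt (t*2) (t*(-1)) \<notin> chessboard" using t by (simp add: chess_iff)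
        ultimately show ?thesis by blast
      next
        case False
        have e: "(-2)*a1+1*a2 = -(2*a1-a2)" by simp
        have "4*((-2)*a1+1*a2)^2 \<ge> a1^2+a2^2" unfolding e power2_minus using b by simp
        from D[OF a _ _ this] False have "sqrt ((t*(-2))^2+(t*1)^2) < r" "sqrt ((t*(-2)-a1)^2+(t*1-a2)^2) < 1"
          by auto
        moreover have "pt (t*(-2)) (t*1) \<notin> chessboard" using t by (simp add: chess_iff)
        ultimately show ?thesis by blast
      qed
    qed
  qed
qed

lemma key_plane:
  fixes N :: "plane set \<Rightarrow> plane set"
  assumes NA: "\<And>A. N_open A \<subseteq> N A \<and> N A \<subseteq> N_closed A"
    and app: "\<forall>r'>0. N A \<inter> ball 0 r' \<noteq> {}" and r: "r > 0"
  shows "\<exists>p \<in> N A \<inter> ball 0 r. p \<in> chessboard"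
    and "\<exists>q \<in> N A \<inter> ball 0 r. q \<notin> chessboard"
proof -
  obtain d where d: "d > 0" and H: "\<forall>a1 a2. a1^2+a2^2 < (1+d)^2 \<longrightarrow>
     (\<exists>x y. sqrt (x^2+y^2) < r \<and> sqrt ((x-a1)^2+(y-a2)^2) < 1 \<and> pt x y \<in> chessboard) \<and>
     (\<exists>x y. sqrt (x^2+y^2) < r \<and> sqrt ((x-a1)^2+(y-a2)^2) < 1 \<and> pt x y \<notin> chessboard)"
    using key_coords[OF r] by blast
  obtain x where x: "x \<in> N A" "x \<in> ball 0 d" using app d by blast
  then have "x \<in> N_closed A" using NA by blast
  then obtain a where a: "a \<in> A" "dist x a \<le> 1" unfolding N_closed_def by blast
  have "norm a \<le> norm x + dist x a"
    by (metis dist_0_norm dist_commute dist_triangle)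
  moreover have "norm x < d" using x(2) by simp
  ultimately have na: "norm a < 1 + d" using a(2) by linarith
  define a1 where "a1 = a$1"
  define a2 where "a2 = a$2"
  have aeq: "a = pt a1 a2" unfolding a1_def a2_def by (rule pt_eta)
  have "norm a = sqrt (a1^2+a2^2)" using aeq norm_pt by simp
  then have "(norm a)^2 = a1^2+a2^2" by simp
  moreover have "(norm a)^2 < (1+d)^2" using na by (intro power_strict_mono) auto
  ultimately have lt: "a1^2+a2^2 < (1+d)^2" by simp
  have mem: "pt x y \<in> N A \<inter> ball 0 r" if "sqrt (x^2+y^2) < r" "sqrt ((x-a1)^2+(y-a2)^2) < 1" for x y
  proof -
    have "dist (pt x y) a < 1" using that(2) aeq dist_pt by simp
    then have "pt x y \<in> N_open A" unfolding N_open_def using a(1) by blast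
    then have "pt x y \<in> N A" using NA by blast
    moreover have "pt x y \<in> ball 0 r" using that(1) by (simp add: norm_pt)
    ultimately show ?thesis by blast
  qed
  from H lt obtain x1 y1 x2 y2 where
    p: "sqrt (x1^2+y1^2) < r" "sqrt ((x1-a1)^2+(y1-a2)^2) < 1" "pt x1 y1 \<in> chessboard" and
    q: "sqrt (x2^2+y2^2) < r" "sqrt ((x2-a1)^2+(y2-a2)^2) < 1" "pt x2 y2 \<notin> chessboard"
    by blast
  show "\<exists>p \<in> N A \<inter> ball 0 r. p \<in> chessboard" using mem[OF p(1,2)] p(3) by blast
  show "\<exists>q \<in> N A \<inter> ball 0 r. q \<notin> chessboard" using mem[OF q(1,2)] q(3) by blast
qed

definition draw_inv :: "(plane set \<Rightarrow> plane set) \<Rightarrow> plane set \<Rightarrow> bool" where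
  "draw_inv N S \<longleftrightarrow> (\<exists>r>0. S \<inter> ball 0 r = {} \<or>
     (\<exists>A. (\<forall>r'>0. N A \<inter> ball 0 r' \<noteq> {}) \<and>
          (N A \<inter> ball 0 r \<subseteq> S \<or> N A \<inter> ball 0 r \<inter> S = {})))"

lemma draw_inv_empty: "draw_inv N {}"
  unfolding draw_inv_def by (intro exI[of _ 1]) auto

lemma draw_inv_shrink:
  assumes "draw_inv N S" "r' > 0" "N A \<inter> ball 0 r' = {}"
  shows "draw_inv N (S \<union> N A)" "draw_inv N (S - N A)"
proof -
  obtain r where r: "r > 0" and h: "S \<inter> ball 0 r = {} \<or>
     (\<exists>B. (\<forall>r'>0. N B \<inter> ball 0 r' \<noteq> {}) \<and>
          (N B \<inter> ball 0 r \<subseteq> S \<or> N B \<inter> ball 0 r \<inter> S = {}))"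
    using assms(1) unfolding draw_inv_def by blast
  define m where "m = min r r'"
  have m: "m > 0" "ball (0::plane) m \<subseteq> ball 0 r" "ball (0::plane) m \<subseteq> ball 0 r'"
    using r assms(2) unfolding m_def by auto
  have disj: "N A \<inter> ball 0 m = {}" using m(3) assms(3) by blast
  show "draw_inv N (S \<union> N A)" unfolding draw_inv_def
    apply (rule exI[of _ m])
    using h m disj by blast
  show "draw_inv N (S - N A)" unfolding draw_inv_def
    apply (rule exI[of _ m])
    using h m disj by blast
qed

lemma draw_inv_step:
  assumes "draw_inv N S"
  shows "draw_inv N (S \<union> N A)" "draw_inv N (S - N A)"
proof -
  show "draw_inv N (S \<union> N A)"
  proof (cases "\<forall>r'>0. N A \<inter> ball 0 r' \<noteq> {}")
    case True
    show ?thesis unfolding draw_inv_def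
      apply (rule exI[of _ "1::real"]) apply (rule conjI, simp) apply (rule disjI2)
      apply (rule exI[of _ A]) using True by blast
  next
    case False
    then show ?thesis using draw_inv_shrink[OF assms] by blast
  qed
  show "draw_inv N (S - N A)"
  proof (cases "\<forall>r'>0. N A \<inter> ball 0 r' \<noteq> {}")
    case True
    show ?thesis unfolding draw_inv_def
      apply (rule exI[of _ "1::real"]) apply (rule conjI, simp) apply (rule disjI2)
      apply (rule exI[of _ A]) using True by blast
  next
    case False
    then show ?thesis using draw_inv_shrink[OF assms] by blast
  qed
qed

lemma draw_inv_Dlevel: "S \<in> Dlevel N (Suc m) \<Longrightarrow> draw_inv N S"
proof (induction m arbitrary: S)
  case 0
  then obtain A where "S = N A" by auto
  then have "S = {} \<union> N A" by simp
  then show ?case using draw_inv_step(1)[OF draw_inv_empty] by metis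
next
  case (Suc m)
  show ?case
  proof (cases "odd (Suc (Suc m))")
    case True
    with Suc.prems obtain D A where "S = D \<union> N A" "D \<in> Dlevel N (Suc m)" by auto
    then show ?thesis using Suc.IH draw_inv_step(1) by blast
  next
    case False
    with Suc.prems obtain D A where "S = D - N A" "D \<in> Dlevel N (Suc m)" by auto
    then show ?thesis using Suc.IH draw_inv_step(2) by blast
  qed
qed

lemma not_inv_chess:
  fixes N :: "plane set \<Rightarrow> plane set"
  assumes NA: "\<And>A. N_open A \<subseteq> N A \<and> N A \<subseteq> N_closed A"
  shows "\<not> draw_inv N chessboard"
proof
  assume "draw_inv N chessboard"
  then obtain r where r: "r > 0" and h: "chessboard \<inter> ball 0 r = {} \<or>
     (\<exists>A. (\<forall>r'>0. N A \<inter> ball 0 r' \<noteq> {}) \<and>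
          (N A \<inter> ball 0 r \<subseteq> chessboard \<or> N A \<inter> ball 0 r \<inter> chessboard = {}))"
    unfolding draw_inv_def by blast
  have z: "(0::plane) = pt 0 0" by (simp add: vec_eq_iff forall_2)
  have "(0::plane) \<in> chessboard" unfolding z chess_iff by simp
  moreover have "(0::plane) \<in> ball 0 r" using r by simp
  ultimately have "chessboard \<inter> ball 0 r \<noteq> {}" by blast
  with h obtain A where app: "\<forall>r'>0. N A \<inter> ball 0 r' \<noteq> {}" and
    c: "N A \<inter> ball 0 r \<subseteq> chessboard \<or> N A \<inter> ball 0 r \<inter> chessboard = {}" by blast
  from key_plane[OF NA app r] c show False by blast
qed

theorem theorem1p1:
  shows "\<not> drawable chessboard \<and> \<not> closed_drawable chessboard"
proof
  have o: "\<And>A. N_open A \<subseteq> N_open A \<and> N_open A \<subseteq> N_closed A"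
    unfolding N_open_def N_closed_def by force
  have c: "\<And>A. N_open A \<subseteq> N_closed A \<and> N_closed A \<subseteq> N_closed A"
    unfolding N_open_def N_closed_def by force
  show "\<not> drawable chessboard"
  proof
    assume "drawable chessboard"
    then obtain n where "n \<ge> 1" "chessboard \<in> Dlevel N_open n" unfolding drawable_def by blast
    then obtain m where "chessboard \<in> Dlevel N_open (Suc m)" by (metis Suc_le_D One_nat_def)
    then show False using draw_inv_Dlevel not_inv_chess[OF o] by blast
  qed
  show "\<not> closed_drawable chessboard"
  proof
    assume "closed_drawable chessboard"
    then obtain n where "n \<ge> 1" "chessboard \<in> Dlevel N_closed n" unfolding closed_drawable_def by blast
    then obtain m where "chessboard \<in> Dlevel N_closed (Suc m)" by (metis Suc_le_D One_nat_def)
    then show False using draw_inv_Dlevel not_inv_chess[OF c] by blast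
  qed
qed

end
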